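(* Let $n\ge2$ and let $Q$ be the $n\times n$ anti-comonotone checkerboard copula, i.e. $Q_{ij}=\frac1n$ if $i+j=n+1$ and $Q_{ij}=0$ otherwise. Then for every $n\times n$ checkerboard copula $P$ there exist nonnegative real numbers $a_{ij}$ ($i,j=1,\dots,n-1$) such that $$P=Q+\sum_{i=1}^{n-1}\sum_{j=1}^{n-1}a_{ij}T^{ij}.$$
   Context: An $n\times n$ checkerboard copula is a real $n\times n$ matrix with nonnegative entries whose row and column sums all equal $\frac1n$. For $i,j\in\{1,\dots,n-1\}$, $T^{ij}=\mathbf{e}_i\mathbf{e}_j^\top+\mathbf{e}_{i+1}\mathbf{e}_{j+1}^\top-\mathbf{e}_i\mathbf{e}_{j+1}^\top-\mathbf{e}_{i+1}\mathbf{e}_j^\top$, where $\mathbf{e}_k$ is the $k$-th standard unit column vector of $\mathbb{R}^n$. *)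

theory Defs
  imports Complex_Main
begin

text \<open>n x n matrices are represented as functions nat => nat => real, with
  1-based indices i, j in {1..n}; entries outside this range are irrelevant.\<close>

definition checkerboard_copula :: "nat \<Rightarrow> (nat \<Rightarrow> nat \<Rightarrow> real) \<Rightarrow> bool" where
  "checkerboard_copula n P \<longleftrightarrow>
     (\<forall>i\<in>{1..n}. \<forall>j\<in>{1..n}. P i j \<ge> 0) \<and>
     (\<forall>i\<in>{1..n}. (\<Sum>j=1..n. P i j) = 1 / real n) \<and>
     (\<forall>j\<in>{1..n}. (\<Sum>i=1..n. P i j) = 1 / real n)"

definition unit_mat :: "nat \<Rightarrow> nat \<Rightarrow> nat \<Rightarrow> nat \<Rightarrow> real" where
  "unit_mat k l = (\<lambda>r c. if r = k \<and> c = l then 1 else 0)"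

definition T_mat :: "nat \<Rightarrow> nat \<Rightarrow> nat \<Rightarrow> nat \<Rightarrow> real" where
  "T_mat i j = (\<lambda>r c. unit_mat i j r c + unit_mat (i+1) (j+1) r c
                     - unit_mat i (j+1) r c - unit_mat (i+1) j r c)"

definition anti_comonotone :: "nat \<Rightarrow> nat \<Rightarrow> nat \<Rightarrow> real" where
  "anti_comonotone n = (\<lambda>i j. if i + j = n + 1 then 1 / real n else 0)"

end

theory Submission
  imports Defs
begin

lemma Q_row: assumes "r \<in> {1..n}" "j \<le> n"
  shows "(\<Sum>c=1..j. anti_comonotone n r c) = (if n + 1 - r \<le> j then 1 / real n else 0)"
proof -
  have "(\<Sum>c=1..j. anti_comonotone n r c) = (\<Sum>c\<in>{1..j}. if c = n + 1 - r then 1 / real n else 0)"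
    using assms by (intro sum.cong) (auto simp: anti_comonotone_def)
  also have "\<dots> = (if n + 1 - r \<in> {1..j} then 1 / real n else 0)"
    by (simp only: sum.delta[OF finite_atLeastAtMost])
  finally show ?thesis using assms by auto
qed

lemma Q_col: assumes "c \<in> {1..n}"
  shows "(\<Sum>r=1..n. anti_comonotone n r c) = 1 / real n"
proof -
  have "(\<Sum>r=1..n. anti_comonotone n r c) = (\<Sum>r\<in>{1..n}. if r = n + 1 - c then 1 / real n else 0)"
    using assms by (intro sum.cong) (auto simp: anti_comonotone_def)
  also have "\<dots> = (if n + 1 - c \<in> {1..n} then 1 / real n else 0)"
    by (simp only: sum.delta[OF finite_atLeastAtMost])
  finally show ?thesis using assms by auto
qed

lemma Q_rect: assumes "i \<le> n" "j \<le> n"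
  shows "(\<Sum>r=1..i. \<Sum>c=1..j. anti_comonotone n r c) = real (i + j - n) / real n"
proof -
  have "(\<Sum>r=1..i. \<Sum>c=1..j. anti_comonotone n r c)
      = (\<Sum>r\<in>{1..i}. if n + 1 - r \<le> j then 1 / real n else 0)"
  proof (intro sum.cong refl)
    fix r assume "r \<in> {1..i}"
    then show "(\<Sum>c=1..j. anti_comonotone n r c) = (if n + 1 - r \<le> j then 1 / real n else 0)"
      using assms by (intro Q_row) auto
  qed
  also have "\<dots> = (\<Sum>r\<in>{r\<in>{1..i}. n + 1 - r \<le> j}. 1 / real n)"
    by (subst sum.inter_filter) auto
  also have "{r\<in>{1..i}. n + 1 - r \<le> j} = {n + 1 - j..i}"
    using assms by auto
  also have "(\<Sum>r\<in>{n + 1 - j..i}. 1 / real n) = real (i + j - n) / real n"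
    using assms by simp
  finally show ?thesis .
qed

lemma sum_ind: "(\<Sum>i\<in>S. \<Sum>j\<in>T. a i j * (if r = i \<and> c = j then 1 else 0))
   = (if r \<in> S \<and> c \<in> T then a r c else (0::real))" if "finite S" "finite T"
proof -
  have "(\<Sum>i\<in>S. \<Sum>j\<in>T. a i j * (if r = i \<and> c = j then 1 else 0))
     = (\<Sum>i\<in>S. if i = r then (if c \<in> T then a r c else 0) else 0)"
  proof (intro sum.cong refl)
    fix i assume "i \<in> S"
    show "(\<Sum>j\<in>T. a i j * (if r = i \<and> c = j then 1 else 0)) = (if i = r then (if c \<in> T then a r c else 0) else 0)"
      using that by (cases "i = r") (auto simp: if_distrib sum.delta cong: if_cong)
  qed
  also have "\<dots> = (if r \<in> S \<and> c \<in> T then a r c else 0)"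
    using that by (simp add: sum.delta')
  finally show ?thesis .
qed


lemma T_expand: assumes "r \<ge> 1" "c \<ge> 1"
  shows "T_mat i j r c = (if r = i \<and> c = j then 1 else 0) + (if r - 1 = i \<and> c - 1 = j then 1 else 0)
     - (if r = i \<and> c - 1 = j then 1 else 0) - (if r - 1 = i \<and> c = j then 1 else 0)"
  using assms by (auto simp: T_mat_def unit_mat_def)

lemma sum_T: assumes "r \<ge> 1" "c \<ge> 1"
  shows "(\<Sum>i=1..m. \<Sum>j=1..m. a i j * T_mat i j r c) =
    (if r \<in> {1..m} \<and> c \<in> {1..m} then a r c else 0)
  + (if r - 1 \<in> {1..m} \<and> c - 1 \<in> {1..m} then a (r-1) (c-1) else 0)
  - (if r \<in> {1..m} \<and> c - 1 \<in> {1..m} then a r (c-1) else 0)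
  - (if r - 1 \<in> {1..m} \<and> c \<in> {1..m} then a (r-1) c else 0)"
proof -
  have "(\<Sum>i=1..m. \<Sum>j=1..m. a i j * T_mat i j r c) =
     (\<Sum>i=1..m. \<Sum>j=1..m. a i j * (if r = i \<and> c = j then 1 else 0))
   + (\<Sum>i=1..m. \<Sum>j=1..m. a i j * (if r - 1 = i \<and> c - 1 = j then 1 else 0))
   - (\<Sum>i=1..m. \<Sum>j=1..m. a i j * (if r = i \<and> c - 1 = j then 1 else 0))
   - (\<Sum>i=1..m. \<Sum>j=1..m. a i j * (if r - 1 = i \<and> c = j then 1 else 0))"
    by (simp add: T_expand[OF assms] algebra_simps sum.distrib sum_subtractf)
  then show ?thesis by (simp only: sum_ind finite_atLeastAtMost)
qed

lemma split_ivl: "j \<le> n \<Longrightarrow> (\<Sum>c=1..n. f c) = (\<Sum>c=1..j. f c) + (\<Sum>c=Suc j..n. (f c::real))"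
proof -
  assume "j \<le> n"
  then have "{1..n} = {1..j} \<union> {Suc j..n}" by auto
  then show ?thesis by (simp add: sum.union_disjoint ivl_disj_int)
qed

theorem lemma9:
  fixes n :: nat and P :: "nat \<Rightarrow> nat \<Rightarrow> real"
  assumes "n \<ge> 2" and "checkerboard_copula n P"
  shows "\<exists>a :: nat \<Rightarrow> nat \<Rightarrow> real.
           (\<forall>i\<in>{1..n-1}. \<forall>j\<in>{1..n-1}. a i j \<ge> 0) \<and>
           (\<forall>r\<in>{1..n}. \<forall>c\<in>{1..n}.
              P r c = anti_comonotone n r c + (\<Sum>i=1..n-1. \<Sum>j=1..n-1. a i j * T_mat i j r c))"
proof -
  have nn: "\<And>i j. i \<in> {1..n} \<Longrightarrow> j \<in> {1..n} \<Longrightarrow> P i j \<ge> 0"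
   and rs: "\<And>i. i \<in> {1..n} \<Longrightarrow> (\<Sum>j=1..n. P i j) = 1 / real n"
   and cs: "\<And>j. j \<in> {1..n} \<Longrightarrow> (\<Sum>i=1..n. P i j) = 1 / real n"
    using assms(2) unfolding checkerboard_copula_def by auto
  define D where "D r c = P r c - anti_comonotone n r c" for r c
  define F where "F i j = (\<Sum>r=1..i. \<Sum>c=1..j. D r c)" for i j
  have FP: "F i j = (\<Sum>r=1..i. \<Sum>c=1..j. P r c) - real (i + j - n) / real n" if "i \<le> n" "j \<le> n" for i j
    using Q_rect[OF that] by (simp add: F_def D_def sum_subtractf)
  have SP0: "(\<Sum>r=1..i. \<Sum>c=1..j. P r c) \<ge> 0" if "i \<le> n" "j \<le> n" for i j
    using that nn by (intro sum_nonneg) auto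
  have SP1: "(\<Sum>r=1..i. \<Sum>c=1..j. P r c) \<ge> real i / real n - real (n - j) / real n" if "i \<le> n" "j \<le> n" for i j
  proof -
    have "(\<Sum>r=1..i. \<Sum>c=1..j. P r c) = (\<Sum>r=1..i. 1 / real n - (\<Sum>c=Suc j..n. P r c))"
    proof (intro sum.cong refl)
      fix r assume "r \<in> {1..i}"
      then show "(\<Sum>c=1..j. P r c) = 1 / real n - (\<Sum>c=Suc j..n. P r c)"
        using rs[of r] split_ivl[OF that(2), of "P r"] that by auto
    qed
    also have "\<dots> = real i / real n - (\<Sum>r=1..i. \<Sum>c=Suc j..n. P r c)"
      by (simp add: sum_subtractf)
    finally have e1: "(\<Sum>r=1..i. \<Sum>c=1..j. P r c) = real i / real n - (\<Sum>r=1..i. \<Sum>c=Suc j..n. P r c)" .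
    have "(\<Sum>r=1..i. \<Sum>c=Suc j..n. P r c) \<le> (\<Sum>r=1..n. \<Sum>c=Suc j..n. P r c)"
      using that nn by (intro sum_mono2) (auto intro!: sum_nonneg)
    also have "\<dots> = (\<Sum>c=Suc j..n. \<Sum>r=1..n. P r c)" by (rule sum.swap)
    also have "\<dots> = (\<Sum>c=Suc j..n. 1 / real n)"
      using cs by (intro sum.cong) auto
    also have "\<dots> = real (n - j) / real n" by simp
    finally show ?thesis using e1 by linarith
  qed
  have Fnn: "F i j \<ge> 0" if "i \<le> n" "j \<le> n" for i j
  proof (cases "i + j \<le> n")
    case True
    then show ?thesis using FP[OF that] SP0[OF that] by simp
  next
    case False
    then have "real (i + j - n) = real i - real (n - j)" using that by auto
    then have "real (i + j - n) / real n = real i / real n - real (n - j) / real n"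
      by (simp add: diff_divide_distrib)
    then show ?thesis using FP[OF that] SP1[OF that] by simp
  qed
  have F0a: "F 0 j = 0" "F i 0 = 0" for i j by (simp_all add: F_def)
  have Fn1: "F n j = 0" if "j \<le> n" for j
  proof -
    have "F n j = (\<Sum>c=1..j. \<Sum>r=1..n. D r c)" unfolding F_def by (rule sum.swap)
    also have "\<dots> = 0"
      using that cs Q_col by (intro sum.neutral) (auto simp: D_def sum_subtractf)
    finally show ?thesis .
  qed
  have Fn2: "F i n = 0" if "i \<le> n" for i
  proof -
    have "(\<Sum>c=1..n. anti_comonotone n r c) = 1 / real n" if "r \<in> {1..n}" for r
      using Q_row[OF that, of n] that by auto
    then show ?thesis
      unfolding F_def using that rs by (intro sum.neutral) (auto simp: D_def sum_subtractf)
  qed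
  have Fdiff: "D r c = F r c - F (r-1) c - F r (c-1) + F (r-1) (c-1)" if "r \<ge> 1" "c \<ge> 1" for r c
  proof -
    define r' where "r' = r - 1"
    define c' where "c' = c - 1"
    have rc: "r = Suc r'" "c = Suc c'" using that by (auto simp: r'_def c'_def)
    show ?thesis unfolding rc F_def by (simp add: sum.distrib)
  qed
  have A: "(if x \<in> {1..n-1} \<and> y \<in> {1..n-1} then F x y else 0) = F x y" if "x \<le> n" "y \<le> n" for x y
  proof -
    have "x = 0 \<or> y = 0 \<or> x = n \<or> y = n \<or> (x \<in> {1..n-1} \<and> y \<in> {1..n-1})"
      using that by auto
    then show ?thesis using that F0a Fn1 Fn2 by auto
  qed
  show ?thesis
  proof (intro exI[of _ F] conjI ballI)
    fix i j assume "i \<in> {1..n-1}" "j \<in> {1..n-1}"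
    then show "F i j \<ge> 0" by (intro Fnn) auto
  next
    fix r c assume r: "r \<in> {1..n}" and c: "c \<in> {1..n}"
    have "(\<Sum>i=1..n-1. \<Sum>j=1..n-1. F i j * T_mat i j r c) = F r c + F (r-1) (c-1) - F r (c-1) - F (r-1) c"
    proof -
      have e: "(\<Sum>i=1..n-1. \<Sum>j=1..n-1. F i j * T_mat i j r c) =
    (if r \<in> {1..n-1} \<and> c \<in> {1..n-1} then F r c else 0)
  + (if r - 1 \<in> {1..n-1} \<and> c - 1 \<in> {1..n-1} then F (r-1) (c-1) else 0)
  - (if r \<in> {1..n-1} \<and> c - 1 \<in> {1..n-1} then F r (c-1) else 0)
  - (if r - 1 \<in> {1..n-1} \<and> c \<in> {1..n-1} then F (r-1) c else 0)"
        using r c by (intro sum_T) auto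
      have "r \<le> n" "c \<le> n" "r - 1 \<le> n" "c - 1 \<le> n" using r c by auto
      then show ?thesis using e A[of r c] A[of "r-1" "c-1"] A[of r "c-1"] A[of "r-1" c] by linarith
    qed
    then show "P r c = anti_comonotone n r c + (\<Sum>i=1..n-1. \<Sum>j=1..n-1. F i j * T_mat i j r c)"
      using Fdiff[of r c] r c by (simp add: D_def)
  qed
qed

end
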